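(* Let $(I,\preceq)$ be a finite poset; for each $i\in I$ let $X_i$ be a finite set with $|X_i|\ge2$ and $P_i$ a Markov chain on $X_i$, and let $\mathbb{L}_i$ be the set of all partitions of $X_i$ with respect to which $P_i$ is lumpable. Let $\{p_i^0\}_{i\in I}$ be a strict probability measure on $I$ and $\mathcal{P}$ the generalized crested product of the $P_i$ defined by $(I,\preceq)$ and $\{p_i^0\}$. For each $i\in I$ let $\Phi_i:X_{A(i)}\to\mathbb{L}_i$ be a map (when $A(i)=\emptyset$, $X_{A(i)}$ is a one-point set and $\Phi_i$ is a single choice of a partition in $\mathbb L_i$), such that $\Phi_i(x_{A(i)})=\Phi_i(y_{A(i)})$ whenever, for every $j\in A(i)$, $\Phi_j(x_{A(j)})=\Phi_j(y_{A(j)})$ and $x_j,y_j$ lie in the same part of this partition. Let $\mathcal{L}$ be the partition of $X=\prod_{i\in I}X_i$ (the generalized product of lumpings) into the classes of the relation: $x\approx y$ iff for every $i\in I$, $\Phi_i(x_{A(i)})=\Phi_i(y_{A(i)})$ and $x_i,y_i$ lie in the same part of this partition of $X_i$. Then $\mathcal{P}$ is lumpable with respect to $\mathcal{L}$.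
   Context: $A(i)=\{j\in I: j\succ i\}$, $H(i)=\{j\in I:j\prec i\}$, $H[i]=H(i)\sqcup\{i\}$; for $J\subseteq I$, $X_J=\prod_{j\in J}X_j$ and $x_J$ is the projection of $x$ onto $X_J$. The generalized crested product is the chain on $X$ with $p(x,y)=\sum_{i\in I}p_i^0\,p_i(x_i,y_i)\prod_{j\in H(i)}\frac{1}{|X_j|}\prod_{j\notin H[i]}\delta(x_j,y_j)$ ($\delta$ the Kronecker delta, $p_i^0>0$, $\sum_ip_i^0=1$). A chain $p$ is lumpable with respect to a partition if for all parts $L,L'$ the map $x\mapsto\sum_{y\in L'}p(x,y)$ is constant on $L$. *)

theory Defs
  imports Complex_Main "HOL-Library.Disjoint_Sets" "HOL-Library.FuncSet"
begin

text \<open>Poset (I, R): R is a partial order on the finite index set I.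
  above R I i = A(i) = {j in I. j > i};  below R I i = H(i) = {j in I. j < i}.\<close>

definition above :: "('i \<times> 'i) set \<Rightarrow> 'i set \<Rightarrow> 'i \<Rightarrow> 'i set" where
  "above R I i = {j \<in> I. (i, j) \<in> R \<and> j \<noteq> i}"

definition below :: "('i \<times> 'i) set \<Rightarrow> 'i set \<Rightarrow> 'i \<Rightarrow> 'i set" where
  "below R I i = {j \<in> I. (j, i) \<in> R \<and> j \<noteq> i}"

definition markov_chain :: "'a set \<Rightarrow> ('a \<Rightarrow> 'a \<Rightarrow> real) \<Rightarrow> bool" where
  "markov_chain S p \<longleftrightarrow> finite S \<and> (\<forall>x\<in>S. \<forall>y\<in>S. p x y \<ge> 0) \<and>
     (\<forall>x\<in>S. (\<Sum>y\<in>S. p x y) = 1)"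

definition lumpable :: "'a set \<Rightarrow> ('a \<Rightarrow> 'a \<Rightarrow> real) \<Rightarrow> 'a set set \<Rightarrow> bool" where
  "lumpable S p L \<longleftrightarrow> partition_on S L \<and>
     (\<forall>B\<in>L. \<forall>B'\<in>L. \<forall>x\<in>B. \<forall>y\<in>B. (\<Sum>z\<in>B'. p x z) = (\<Sum>z\<in>B'. p y z))"

definition crested_product ::
  "'i set \<Rightarrow> ('i \<times> 'i) set \<Rightarrow> ('i \<Rightarrow> 'a set) \<Rightarrow> ('i \<Rightarrow> real) \<Rightarrow> ('i \<Rightarrow> 'a \<Rightarrow> 'a \<Rightarrow> real)
    \<Rightarrow> ('i \<Rightarrow> 'a) \<Rightarrow> ('i \<Rightarrow> 'a) \<Rightarrow> real" where
  "crested_product I R X p0 P x y =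
     (\<Sum>i\<in>I. p0 i * P i (x i) (y i)
        * (\<Prod>j\<in>below R I i. 1 / real (card (X j)))
        * (\<Prod>j\<in>I - insert i (below R I i). if x j = y j then 1 else 0))"

definition same_block :: "'a set set \<Rightarrow> 'a \<Rightarrow> 'a \<Rightarrow> bool" where
  "same_block L a b \<longleftrightarrow> (\<exists>B\<in>L. a \<in> B \<and> b \<in> B)"

definition prod_lump_rel ::
  "'i set \<Rightarrow> ('i \<times> 'i) set \<Rightarrow> ('i \<Rightarrow> 'a set) \<Rightarrow> ('i \<Rightarrow> ('i \<Rightarrow> 'a) \<Rightarrow> 'a set set)
     \<Rightarrow> (('i \<Rightarrow> 'a) \<times> ('i \<Rightarrow> 'a)) set" where
  "prod_lump_rel I R X \<Phi> = {(x, y). x \<in> PiE I X \<and> y \<in> PiE I X \<and>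
     (\<forall>i\<in>I. \<Phi> i (restrict x (above R I i)) = \<Phi> i (restrict y (above R I i)) \<and>
             same_block (\<Phi> i (restrict x (above R I i))) (x i) (y i))}"

definition prod_lumping ::
  "'i set \<Rightarrow> ('i \<times> 'i) set \<Rightarrow> ('i \<Rightarrow> 'a set) \<Rightarrow> ('i \<Rightarrow> ('i \<Rightarrow> 'a) \<Rightarrow> 'a set set)
     \<Rightarrow> ('i \<Rightarrow> 'a) set set" where
  "prod_lumping I R X \<Phi> = PiE I X // prod_lump_rel I R X \<Phi>"

end

theory Submission
  imports Defs
begin

lemma sb_refl: "partition_on S L \<Longrightarrow> a \<in> S \<Longrightarrow> same_block L a a"
  unfolding same_block_def partition_on_def by blast

lemma sb_sym: "same_block L a b \<Longrightarrow> same_block L b a"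
  unfolding same_block_def by blast

lemma sb_trans: "partition_on S L \<Longrightarrow> same_block L a b \<Longrightarrow> same_block L b c \<Longrightarrow> same_block L a c"
  unfolding same_block_def partition_on_def disjoint_def by blast

lemma prod_indic:
  assumes "finite J"
  shows "(\<Prod>j\<in>J. if x j = z j then 1 else 0 :: real) = (if \<forall>j\<in>J. z j = x j then 1 else 0)"
  using assms by (induction J rule: finite_induct) auto

lemma sum_partition_const:
  fixes p q g :: "'a \<Rightarrow> real"
  assumes part: "partition_on S L" and fin: "finite S"
    and eq: "\<And>C. C \<in> L \<Longrightarrow> (\<Sum>a\<in>C. p a) = (\<Sum>a\<in>C. q a)"
    and const: "\<And>C a b. C \<in> L \<Longrightarrow> a \<in> C \<Longrightarrow> b \<in> C \<Longrightarrow> g a = g b"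
  shows "(\<Sum>a\<in>S. p a * g a) = (\<Sum>a\<in>S. q a * g a)"
proof -
  have SU: "S = \<Union>L" using part by (simp add: partition_on_def)
  have finL: "finite L" using fin SU by (simp add: finite_UnionD)
  have finC: "\<forall>C\<in>L. finite C" using fin SU by (meson Union_upper finite_subset)
  have dis: "\<forall>A\<in>L. \<forall>B\<in>L. A \<noteq> B \<longrightarrow> A \<inter> B = {}"
    using part unfolding partition_on_def disjoint_def by blast
  have blk: "(\<Sum>a\<in>C. p a * g a) = (\<Sum>a\<in>C. q a * g a)" if C: "C \<in> L" for C
  proof -
    have "C \<noteq> {}" using part C by (auto simp: partition_on_def)
    then obtain c where c: "c \<in> C" by blast
    have "(\<Sum>a\<in>C. p a * g a) = (\<Sum>a\<in>C. p a * g c)"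
      by (rule sum.cong) (use const[OF C _ c] in auto)
    also have "\<dots> = (\<Sum>a\<in>C. p a) * g c" by (simp add: sum_distrib_right)
    also have "\<dots> = (\<Sum>a\<in>C. q a) * g c" using eq[OF C] by simp
    also have "\<dots> = (\<Sum>a\<in>C. q a * g c)" by (simp add: sum_distrib_right)
    also have "\<dots> = (\<Sum>a\<in>C. q a * g a)"
      by (rule sum.cong) (use const[OF C _ c] in auto)
    finally show ?thesis .
  qed
  have U: "\<And>g. sum g (\<Union>L) = (\<Sum>C\<in>L. sum g C)"
    using sum.Union_disjoint[OF finC dis] by simp
  have "(\<Sum>a\<in>S. p a * g a) = (\<Sum>C\<in>L. \<Sum>a\<in>C. p a * g a)"
    unfolding SU by (rule U)
  also have "\<dots> = (\<Sum>C\<in>L. \<Sum>a\<in>C. q a * g a)" using blk by simp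
  also have "\<dots> = (\<Sum>a\<in>S. q a * g a)"
    unfolding SU by (rule U[symmetric])
  finally show ?thesis .
qed

lemma sum_count:
  fixes f :: "'a \<Rightarrow> real"
  assumes finZ: "finite Z" and finS: "finite S" and sub: "\<And>z. z \<in> Z \<Longrightarrow> h z \<in> S"
  shows "(\<Sum>z\<in>Z. f (h z)) = (\<Sum>a\<in>S. f a * real (card {z\<in>Z. h z = a}))"
proof -
  have "(\<Sum>z\<in>Z. f (h z)) = (\<Sum>z\<in>Z. \<Sum>a\<in>S. if h z = a then f a else 0)"
    by (rule sum.cong) (auto simp: sub finS)
  also have "\<dots> = (\<Sum>a\<in>S. \<Sum>z\<in>Z. if h z = a then f a else 0)" by (rule sum.swap)
  also have "\<dots> = (\<Sum>a\<in>S. f a * real (card {z\<in>Z. h z = a}))"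
    by (rule sum.cong) (simp_all add: sum.inter_filter[symmetric] finZ)
  finally show ?thesis .
qed

locale crest =
  fixes I :: "'i set" and R :: "('i \<times> 'i) set" and X :: "'i \<Rightarrow> 'a set"
    and P :: "'i \<Rightarrow> 'a \<Rightarrow> 'a \<Rightarrow> real" and p0 :: "'i \<Rightarrow> real"
    and \<Phi> :: "'i \<Rightarrow> ('i \<Rightarrow> 'a) \<Rightarrow> 'a set set"
  assumes fin_I: "finite I"
    and poset: "partial_order_on I R"
    and fin_X: "\<And>i. i \<in> I \<Longrightarrow> finite (X i)"
    and Phi_lump: "\<And>i z. i \<in> I \<Longrightarrow> z \<in> PiE (above R I i) X \<Longrightarrow>
                      lumpable (X i) (P i) (\<Phi> i z)"
    and Phi_compat: "\<And>i x y. i \<in> I \<Longrightarrow> x \<in> PiE I X \<Longrightarrow> y \<in> PiE I X \<Longrightarrow>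
        (\<forall>j\<in>above R I i. \<Phi> j (restrict x (above R I j)) = \<Phi> j (restrict y (above R I j))
            \<and> same_block (\<Phi> j (restrict x (above R I j))) (x j) (y j)) \<Longrightarrow>
        \<Phi> i (restrict x (above R I i)) = \<Phi> i (restrict y (above R I i))"
begin

abbreviation "A \<equiv> above R I"
abbreviation "H \<equiv> below R I"
abbreviation "rel \<equiv> prod_lump_rel I R X \<Phi>"
definition "J i = I - insert i (H i)"

lemma trR: "trans R" and asR: "antisym R" using partial_order_onD[OF poset] by auto

lemma A_sub: "A k \<subseteq> I" by (auto simp: above_def)

lemma restr_in: "z \<in> PiE I X \<Longrightarrow> S \<subseteq> I \<Longrightarrow> restrict z S \<in> PiE S X"
  by (auto simp: PiE_iff)

lemma part: "k \<in> I \<Longrightarrow> z \<in> PiE I X \<Longrightarrow> partition_on (X k) (\<Phi> k (restrict z (A k)))"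
  using Phi_lump[OF _ restr_in[OF _ A_sub]] by (simp add: lumpable_def)

lemma lumpP: "k \<in> I \<Longrightarrow> z \<in> PiE I X \<Longrightarrow> lumpable (X k) (P k) (\<Phi> k (restrict z (A k)))"
  using Phi_lump[OF _ restr_in[OF _ A_sub]] by simp

lemma A_card: assumes "j \<in> A k" shows "card (A j) < card (A k)"
proof (rule psubset_card_mono)
  show "finite (A k)" using fin_I A_sub finite_subset by blast
  have "A j \<subseteq> A k"
  proof
    fix l assume l: "l \<in> A j"
    have kj: "(k,j) \<in> R" "j \<noteq> k" "j \<in> I" using assms by (auto simp: above_def)
    have jl: "(j,l) \<in> R" "l \<noteq> j" "l \<in> I" using l by (auto simp: above_def)
    have "(k,l) \<in> R" using trR kj jl by (meson transD)
    moreover have "l \<noteq> k" using asR kj jl by (metis antisymD)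
    ultimately show "l \<in> A k" using jl by (auto simp: above_def)
  qed
  moreover have "j \<notin> A j" by (simp add: above_def)
  ultimately show "A j \<subset> A k" using assms by blast
qed

lemma A_sub_J: assumes "k \<in> J i" shows "A k \<subseteq> J i"
proof
  fix j assume j: "j \<in> A k"
  have kj: "(k,j) \<in> R" "j \<noteq> k" "j \<in> I" "k \<in> I" "k \<noteq> i" "k \<notin> H i"
    using j assms by (auto simp: above_def J_def)
  show "j \<in> J i"
  proof (rule ccontr)
    assume "j \<notin> J i"
    then have "j = i \<or> (j,i) \<in> R" using kj by (auto simp: J_def below_def)
    then have "(k,i) \<in> R" using kj trR by (meson transD)
    then show False using kj by (auto simp: below_def)
  qed
qed

lemma i_notin_J: "i \<notin> J i" by (simp add: J_def)
lemma J_sub: "J i \<subseteq> I" by (auto simp: J_def)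
lemma A_sub_J': "i \<in> I \<Longrightarrow> A i \<subseteq> J i"
proof
  fix j assume "i \<in> I" "j \<in> A i"
  then show "j \<in> J i" using asR by (auto simp: J_def above_def below_def dest: antisymD)
qed

lemma equiv_rel: "equiv (PiE I X) rel"
proof (rule equivI)
  show "rel \<subseteq> PiE I X \<times> PiE I X" by (auto simp: prod_lump_rel_def)
  show "refl_on (PiE I X) rel"
    unfolding refl_on_def prod_lump_rel_def
    by (auto intro!: sb_refl[OF part] simp: PiE_iff)
  show "sym rel"
  proof (rule symI)
    fix x y assume "(x,y) \<in> rel"
    then show "(y,x) \<in> rel" unfolding prod_lump_rel_def by auto (metis sb_sym)
  qed
  show "trans rel"
  proof (rule transI)
    fix x y z assume xy: "(x,y) \<in> rel" and yz: "(y,z) \<in> rel"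
    show "(x,z) \<in> rel" unfolding prod_lump_rel_def
    proof (clarsimp, intro conjI ballI)
      show "x \<in> PiE I X" "z \<in> PiE I X" using xy yz by (auto simp: prod_lump_rel_def)
      fix i assume i: "i \<in> I"
      have a: "\<Phi> i (restrict x (A i)) = \<Phi> i (restrict y (A i))"
        "same_block (\<Phi> i (restrict x (A i))) (x i) (y i)"
        "\<Phi> i (restrict y (A i)) = \<Phi> i (restrict z (A i))"
        "same_block (\<Phi> i (restrict y (A i))) (y i) (z i)"
        using xy yz i by (auto simp: prod_lump_rel_def)
      have p: "partition_on (X i) (\<Phi> i (restrict x (A i)))"
        using part[OF i] xy by (auto simp: prod_lump_rel_def)
      show "\<Phi> i (restrict x (A i)) = \<Phi> i (restrict z (A i))" using a by simp
      show "same_block (\<Phi> i (restrict x (A i))) (x i) (z i)"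
        using sb_trans[OF p a(2)] a by simp
    qed
  qed
qed

lemma L1:
  assumes z: "z \<in> PiE I X" and z': "z' \<in> PiE I X"
    and agree: "\<And>j. j \<in> D \<Longrightarrow> z j = z' j"
    and cond: "\<And>k. k \<in> I \<Longrightarrow> k \<notin> D \<Longrightarrow> \<Phi> k (restrict z (A k)) = \<Phi> k (restrict z' (A k))
                   \<and> same_block (\<Phi> k (restrict z (A k))) (z k) (z' k)"
  shows "(z, z') \<in> rel"
proof -
  have Q: "\<And>k. k \<in> I \<Longrightarrow> card (A k) = n \<Longrightarrow> \<Phi> k (restrict z (A k)) = \<Phi> k (restrict z' (A k))
                   \<and> same_block (\<Phi> k (restrict z (A k))) (z k) (z' k)" for n
  proof (induction n rule: less_induct)
    case (less n)
    show ?case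
    proof (cases "k \<in> D")
      case False show ?thesis by (rule cond[OF less(2) False])
    next
      case True
      have IH: "\<forall>j\<in>A k. \<Phi> j (restrict z (A j)) = \<Phi> j (restrict z' (A j))
                   \<and> same_block (\<Phi> j (restrict z (A j))) (z j) (z' j)"
        using less A_card A_sub by blast
      have eq: "\<Phi> k (restrict z (A k)) = \<Phi> k (restrict z' (A k))"
        using Phi_compat[OF less(2) z z' IH] .
      have "same_block (\<Phi> k (restrict z (A k))) (z k) (z' k)"
        using sb_refl[OF part[OF less(2) z]] agree[OF True] z less(2) by (auto simp: PiE_iff)
      then show ?thesis using eq by blast
    qed
  qed
  show ?thesis unfolding prod_lump_rel_def using z z' Q by blast
qed

definition "Zs B' x i = {z\<in>B'. \<forall>j\<in>J i. z j = x j}"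

lemma relP: "(x,y) \<in> rel \<Longrightarrow> x \<in> PiE I X \<and> y \<in> PiE I X"
  by (auto simp: prod_lump_rel_def)

lemma quotP: "B' \<in> PiE I X // rel \<Longrightarrow> B' \<subseteq> PiE I X"
  using in_quotient_imp_subset[OF equiv_rel] .

lemma finPi: "finite (PiE I X)"
  using fin_I fin_X by (simp add: finite_PiE)

lemma swapZ:
  assumes xy: "(x,y) \<in> rel" and i: "i \<in> I" and B': "B' \<in> PiE I X // rel"
    and z: "z \<in> Zs B' x i"
  shows "(\<lambda>k. if k \<in> J i then y k else z k) \<in> Zs B' y i"
proof -
  define z' where "z' = (\<lambda>k. if k \<in> J i then y k else z k)"
  have zB: "z \<in> B'" and zJ: "\<forall>j\<in>J i. z j = x j" using z by (auto simp: Zs_def)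
  have zP: "z \<in> PiE I X" using quotP[OF B'] zB by blast
  have xP: "x \<in> PiE I X" and yP: "y \<in> PiE I X" using relP[OF xy] by auto
  have z'P: "z' \<in> PiE I X"
    using zP yP J_sub unfolding z'_def by (auto simp: PiE_iff extensional_def)
  have "(z, z') \<in> rel"
  proof (rule L1[OF zP z'P, of "I - J i"])
    fix j assume "j \<in> I - J i" then show "z j = z' j" by (simp add: z'_def)
  next
    fix k assume k: "k \<in> I" "k \<notin> I - J i"
    then have kJ: "k \<in> J i" by blast
    have r1: "restrict z (A k) = restrict x (A k)"
      using A_sub_J[OF kJ] zJ by (intro restrict_ext) blast
    have r2: "restrict z' (A k) = restrict y (A k)"
      using A_sub_J[OF kJ] by (intro restrict_ext) (auto simp: z'_def)
    have "z k = x k" "z' k = y k" using kJ zJ by (auto simp: z'_def)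
    then show "\<Phi> k (restrict z (A k)) = \<Phi> k (restrict z' (A k))
                   \<and> same_block (\<Phi> k (restrict z (A k))) (z k) (z' k)"
      using r1 r2 xy k(1) by (auto simp: prod_lump_rel_def)
  qed
  then have "z' \<in> B'" using in_quotient_imp_closed[OF equiv_rel B' zB] by blast
  then show ?thesis unfolding Zs_def z'_def[symmetric] by (auto simp: z'_def)
qed

lemma step1:
  assumes xy: "(x,y) \<in> rel" and i: "i \<in> I" and B': "B' \<in> PiE I X // rel"
  shows "(\<Sum>z\<in>Zs B' x i. P i a (z i)) = (\<Sum>z\<in>Zs B' y i. P i a (z i))"
proof -
  have yx: "(y,x) \<in> rel" using xy equiv_rel by (meson equivE symD)
  show ?thesis
  proof (rule sum.reindex_bij_witness[where j="\<lambda>z k. if k \<in> J i then y k else z k"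
        and i="\<lambda>z k. if k \<in> J i then x k else z k"])
    fix z assume z: "z \<in> Zs B' x i"
    then show "(\<lambda>k. if k \<in> J i then x k else (if k \<in> J i then y k else z k)) = z"
      by (auto simp: Zs_def)
    show "(\<lambda>k. if k \<in> J i then y k else z k) \<in> Zs B' y i" by (rule swapZ[OF xy i B' z])
    show "P i a ((if i \<in> J i then y i else z i)) = P i a (z i)" by (simp add: i_notin_J)
  next
    fix z assume z: "z \<in> Zs B' y i"
    then show "(\<lambda>k. if k \<in> J i then y k else (if k \<in> J i then x k else z k)) = z"
      by (auto simp: Zs_def)
    show "(\<lambda>k. if k \<in> J i then x k else z k) \<in> Zs B' x i" by (rule swapZ[OF yx i B' z])
  qed
qed

lemma cardle:
  assumes xP: "x \<in> PiE I X" and i: "i \<in> I" and B': "B' \<in> PiE I X // rel"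
    and C: "C \<in> \<Phi> i (restrict x (A i))" and a: "a \<in> C" and b: "b \<in> C"
  shows "card {z\<in>Zs B' x i. z i = a} \<le> card {z\<in>Zs B' x i. z i = b}"
proof (rule card_inj_on_le)
  show "finite {z\<in>Zs B' x i. z i = b}"
    using finPi quotP[OF B'] by (auto simp: Zs_def intro: finite_subset)
  show "inj_on (\<lambda>z. z(i:=b)) {z\<in>Zs B' x i. z i = a}"
  proof (rule inj_onI)
    fix z w assume "z \<in> {z\<in>Zs B' x i. z i = a}" "w \<in> {z\<in>Zs B' x i. z i = a}"
      and e: "z(i:=b) = w(i:=b)"
    then have "z i = w i" by simp
    then show "z = w" using e by (metis fun_upd_triv fun_upd_upd)
  qed
  have bX: "b \<in> X i" using part[OF i xP] C b by (auto simp: partition_on_def)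
  show "(\<lambda>z. z(i:=b)) ` {z\<in>Zs B' x i. z i = a} \<subseteq> {z\<in>Zs B' x i. z i = b}"
  proof clarify
    fix z assume z: "z \<in> Zs B' x i" and za: "a = z i"
    have zB: "z \<in> B'" and zJ: "\<forall>j\<in>J i. z j = x j" using z by (auto simp: Zs_def)
    have zP: "z \<in> PiE I X" using quotP[OF B'] zB by blast
    have z'P: "z(i:=b) \<in> PiE I X" using zP bX i by (auto simp: PiE_iff extensional_def)
    have rA: "restrict z (A i) = restrict x (A i)"
      using A_sub_J'[OF i] zJ by (intro restrict_ext) blast
    have rA2: "restrict (z(i:=b)) (A i) = restrict z (A i)"
      by (intro restrict_ext) (simp add: above_def)
    have "(z, z(i:=b)) \<in> rel"
    proof (rule L1[OF zP z'P, of "I - {i}"])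
      fix j assume "j \<in> I - {i}" then show "z j = (z(i:=b)) j" by simp
    next
      fix k assume k: "k \<in> I" "k \<notin> I - {i}"
      then have "k = i" by blast
      moreover have "same_block (\<Phi> i (restrict z (A i))) (z i) b"
        using rA C a b za unfolding same_block_def by auto
      ultimately show "\<Phi> k (restrict z (A k)) = \<Phi> k (restrict (z(i:=b)) (A k))
                   \<and> same_block (\<Phi> k (restrict z (A k))) (z k) ((z(i:=b)) k)"
        using rA2 by simp
    qed
    then have "z(i:=b) \<in> B'" using in_quotient_imp_closed[OF equiv_rel B' zB] by blast
    then show "z(i:=b) \<in> Zs B' x i \<and> (z(i:=b)) i = b"
      using zJ i_notin_J unfolding Zs_def by auto
  qed
qed

lemma step2:
  assumes xy: "(x,y) \<in> rel" and i: "i \<in> I" and B': "B' \<in> PiE I X // rel"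
  shows "(\<Sum>z\<in>Zs B' x i. P i (x i) (z i)) = (\<Sum>z\<in>Zs B' x i. P i (y i) (z i))"
proof -
  have xP: "x \<in> PiE I X" using relP[OF xy] by auto
  define Z where "Z = Zs B' x i"
  define L where "L = \<Phi> i (restrict x (A i))"
  have finZ: "finite Z"
    using finPi quotP[OF B'] by (auto simp: Z_def Zs_def intro: finite_subset)
  have sub: "\<And>z. z \<in> Z \<Longrightarrow> z i \<in> X i"
    using quotP[OF B'] i by (auto simp: Z_def Zs_def PiE_iff)
  have pL: "partition_on (X i) L" unfolding L_def by (rule part[OF i xP])
  have lump: "lumpable (X i) (P i) L" unfolding L_def by (rule lumpP[OF i xP])
  obtain B0 where B0: "B0 \<in> L" "x i \<in> B0" "y i \<in> B0"
    using xy i unfolding prod_lump_rel_def same_block_def L_def by blast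
  have "(\<Sum>z\<in>Z. P i (x i) (z i)) = (\<Sum>a\<in>X i. P i (x i) a * real (card {z\<in>Z. z i = a}))"
    by (rule sum_count[OF finZ fin_X[OF i] sub])
  also have "\<dots> = (\<Sum>a\<in>X i. P i (y i) a * real (card {z\<in>Z. z i = a}))"
  proof (rule sum_partition_const[OF pL fin_X[OF i]])
    fix C assume "C \<in> L"
    then show "(\<Sum>a\<in>C. P i (x i) a) = (\<Sum>a\<in>C. P i (y i) a)"
      using lump B0 unfolding lumpable_def by blast
  next
    fix C a b assume "C \<in> L" "a \<in> C" "b \<in> C"
    then show "real (card {z\<in>Z. z i = a}) = real (card {z\<in>Z. z i = b})"
      using cardle[OF xP i B', of C a b] cardle[OF xP i B', of C b a]
      unfolding Z_def L_def by simp
  qed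
  also have "\<dots> = (\<Sum>z\<in>Z. P i (y i) (z i))"
    by (rule sum_count[OF finZ fin_X[OF i] sub, symmetric])
  finally show ?thesis unfolding Z_def .
qed

lemma decomp:
  assumes B': "B' \<in> PiE I X // rel"
  shows "(\<Sum>z\<in>B'. crested_product I R X p0 P w z)
    = (\<Sum>i\<in>I. (p0 i * (\<Prod>j\<in>H i. 1 / real (card (X j)))) * (\<Sum>z\<in>Zs B' w i. P i (w i) (z i)))"
proof -
  have finB: "finite B'" using finPi quotP[OF B'] finite_subset by blast
  have "(\<Sum>z\<in>B'. crested_product I R X p0 P w z)
     = (\<Sum>i\<in>I. \<Sum>z\<in>B'. p0 i * P i (w i) (z i) * (\<Prod>j\<in>H i. 1 / real (card (X j)))
          * (\<Prod>j\<in>J i. if w j = z j then 1 else 0))"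
    unfolding crested_product_def J_def by (rule sum.swap)
  also have "\<dots> = (\<Sum>i\<in>I. (p0 i * (\<Prod>j\<in>H i. 1 / real (card (X j)))) * (\<Sum>z\<in>Zs B' w i. P i (w i) (z i)))"
  proof (rule sum.cong[OF refl])
    fix i assume i: "i \<in> I"
    have fJ: "finite (J i)" using fin_I J_sub finite_subset by blast
    have "(\<Sum>z\<in>B'. p0 i * P i (w i) (z i) * (\<Prod>j\<in>H i. 1 / real (card (X j)))
          * (\<Prod>j\<in>J i. if w j = z j then 1 else 0))
        = (\<Sum>z\<in>B'. (p0 i * (\<Prod>j\<in>H i. 1 / real (card (X j))))
             * (if \<forall>j\<in>J i. z j = w j then P i (w i) (z i) else 0))"
      by (rule sum.cong[OF refl]) (simp add: prod_indic[OF fJ])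
    also have "\<dots> = (p0 i * (\<Prod>j\<in>H i. 1 / real (card (X j))))
             * (\<Sum>z\<in>B'. if \<forall>j\<in>J i. z j = w j then P i (w i) (z i) else 0)"
      by (simp add: sum_distrib_left)
    also have "\<dots> = (p0 i * (\<Prod>j\<in>H i. 1 / real (card (X j)))) * (\<Sum>z\<in>Zs B' w i. P i (w i) (z i))"
      unfolding Zs_def by (simp add: sum.inter_filter[OF finB])
    finally show "(\<Sum>z\<in>B'. p0 i * P i (w i) (z i) * (\<Prod>j\<in>H i. 1 / real (card (X j)))
          * (\<Prod>j\<in>J i. if w j = z j then 1 else 0)) = \<dots>" .
  qed
  finally show ?thesis .
qed

lemma lump_main: "lumpable (PiE I X) (crested_product I R X p0 P) (PiE I X // rel)"
  unfolding lumpable_def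
proof (intro conjI ballI)
  show "partition_on (PiE I X) (PiE I X // rel)" by (rule partition_on_quotient[OF equiv_rel])
  fix B B' x y assume B: "B \<in> PiE I X // rel" and B': "B' \<in> PiE I X // rel"
    and x: "x \<in> B" and y: "y \<in> B"
  have xy: "(x,y) \<in> rel" using quotient_eq_iff[OF equiv_rel B B x y] by simp
  show "(\<Sum>z\<in>B'. crested_product I R X p0 P x z) = (\<Sum>z\<in>B'. crested_product I R X p0 P y z)"
    unfolding decomp[OF B'] using step1[OF xy _ B'] step2[OF xy _ B'] by simp
qed

end

theorem theorem7:
  fixes I :: "'i set" and R :: "('i \<times> 'i) set" and X :: "'i \<Rightarrow> 'a set"
    and P :: "'i \<Rightarrow> 'a \<Rightarrow> 'a \<Rightarrow> real" and p0 :: "'i \<Rightarrow> real"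
    and \<Phi> :: "'i \<Rightarrow> ('i \<Rightarrow> 'a) \<Rightarrow> 'a set set"
  assumes fin_I: "finite I"
    and poset: "partial_order_on I R"
    and fin_X: "\<And>i. i \<in> I \<Longrightarrow> finite (X i)"
    and card_X: "\<And>i. i \<in> I \<Longrightarrow> card (X i) \<ge> 2"
    and chain: "\<And>i. i \<in> I \<Longrightarrow> markov_chain (X i) (P i)"
    and p0_pos: "\<And>i. i \<in> I \<Longrightarrow> p0 i > 0"
    and p0_sum: "(\<Sum>i\<in>I. p0 i) = 1"
    and Phi_lump: "\<And>i z. i \<in> I \<Longrightarrow> z \<in> PiE (above R I i) X \<Longrightarrow>
                      lumpable (X i) (P i) (\<Phi> i z)"
    and Phi_compat: "\<And>i x y. i \<in> I \<Longrightarrow> x \<in> PiE I X \<Longrightarrow> y \<in> PiE I X \<Longrightarrow>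
        (\<forall>j\<in>above R I i. \<Phi> j (restrict x (above R I j)) = \<Phi> j (restrict y (above R I j))
            \<and> same_block (\<Phi> j (restrict x (above R I j))) (x j) (y j)) \<Longrightarrow>
        \<Phi> i (restrict x (above R I i)) = \<Phi> i (restrict y (above R I i))"
  shows "lumpable (PiE I X) (crested_product I R X p0 P) (prod_lumping I R X \<Phi>)"
proof -
  interpret crest I R X P p0 \<Phi>
    using fin_I poset fin_X Phi_lump Phi_compat by unfold_locales blast+
  show ?thesis unfolding prod_lumping_def by (rule lump_main)
qed

end
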